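(* In the setting of the context, let $u_l\in k[\Gamma]$, $1\le l\le p$, be elements which are central in $A$ and such that $u_l=0$ whenever $\psi_l^{N_l}\ne\varepsilon$. Let $M$ be a free right $k[\Gamma]$-module with basis $(m(t))_{t\in\mathbb T}$, and let $\varphi:A\to M$ be the right $k[\Gamma]$-linear map with $\varphi(y^ty^{aN})=m(t)u^a$ for all $t\in\mathbb T$, $a\in\mathbb N^p$, where $u^a=u_1^{a_1}\cdots u_p^{a_p}$. Then the kernel of $\varphi$ is a right ideal of $A$.
   Context: $k$ algebraically closed of characteristic $0$. $\Gamma$ is an abelian group, $\widehat\Gamma$ its characters, $\varepsilon$ the trivial character. $A$ is an algebra containing the group algebra $k[\Gamma]$ as a subalgebra, $p\ge1$, and $y_1,\dots,y_p\in A$, $h_1,\dots,h_p\in\Gamma$, $\psi_1,\dots,\psi_p\in\widehat\Gamma$, $N_1,\dots,N_p\ge1$ satisfy: (c1) $gy_l=\psi_l(g)y_lg$ for all $l$ and $g\in\Gamma$; (c2) $y_ky_l^{N_l}=\psi_l^{N_l}(h_k)y_l^{N_l}y_k$ for all $k,l$; (c3) the elements $y_1^{a_1}\cdots y_p^{a_p}g$, $a_i\ge0$, $g\in\Gamma$, form a basis of $A$. Put $\mathbb T=\{t\in\mathbb N^p:0\le t_l<N_l\ \forall l\}$ and, for $a\in\mathbb N^p$, $y^a=y_1^{a_1}\cdots y_p^{a_p}$ and $aN=(a_1N_1,\dots,a_pN_p)$; thus $y^{aN}=y_1^{a_1N_1}\cdots y_p^{a_pN_p}$. Every element of $A$ is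 uniquely $\sum_{t\in\mathbb T,a\in\mathbb N^p}y^ty^{aN}v_{t,a}$ with $v_{t,a}\in k[\Gamma]$, so $\varphi$ is well defined. *)

theory Defs
  imports "HOL-Computational_Algebra.Polynomial"
begin

text \<open>Algebras over a field are modelled as a ring 'a together with a ring
homomorphism sc from the field 'k into the centre of 'a; the k-vector space
structure is x \<mapsto> sc c * x.  Indices l = 1..p of the paper are 0..<p here.\<close>

definition alg_closed_field :: "'k::field itself \<Rightarrow> bool" where
  "alg_closed_field _ \<longleftrightarrow> (\<forall>q :: 'k poly. degree q > 0 \<longrightarrow> (\<exists>x. poly q x = 0))"

definition central_hom :: "('k::field \<Rightarrow> 'a::ring_1) \<Rightarrow> bool" where
  "central_hom sc \<longleftrightarrow> sc 1 = 1 \<and> (\<forall>c d. sc (c + d) = sc c + sc d) \<and>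
     (\<forall>c d. sc (c * d) = sc c * sc d) \<and> (\<forall>c x. sc c * x = x * sc c)"

text \<open>Group homomorphism from the (additively written) abelian group into the
units of A, i.e. the inclusion of the group elements into A.\<close>
definition grp_emb :: "('g::ab_group_add \<Rightarrow> 'a::ring_1) \<Rightarrow> bool" where
  "grp_emb \<iota> \<longleftrightarrow> \<iota> 0 = 1 \<and> (\<forall>g h. \<iota> (g + h) = \<iota> g * \<iota> h)"

definition is_character :: "('g::ab_group_add \<Rightarrow> 'k::field) \<Rightarrow> bool" where
  "is_character \<psi> \<longleftrightarrow> (\<forall>g. \<psi> g \<noteq> 0) \<and> (\<forall>g h. \<psi> (g + h) = \<psi> g * \<psi> h)"

definition group_alg :: "('k::field \<Rightarrow> 'a::ring_1) \<Rightarrow> ('g \<Rightarrow> 'a) \<Rightarrow> 'a set" where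
  "group_alg sc \<iota> = {x. \<exists>F c. finite F \<and> x = (\<Sum>g\<in>F. sc (c g) * \<iota> g)}"

definition is_kbasis :: "('k::field \<Rightarrow> 'a::ring_1) \<Rightarrow> 'i set \<Rightarrow> ('i \<Rightarrow> 'a) \<Rightarrow> bool" where
  "is_kbasis sc S e \<longleftrightarrow> (\<forall>x. \<exists>!c. (\<forall>s. s \<notin> S \<longrightarrow> c s = 0) \<and> finite {s. c s \<noteq> 0} \<and>
       x = (\<Sum>s\<in>{s. c s \<noteq> 0}. sc (c s) * e s))"

definition multi_idx :: "nat \<Rightarrow> (nat \<Rightarrow> nat) set" where
  "multi_idx p = {a. \<forall>i\<ge>p. a i = 0}"

definition ymon :: "(nat \<Rightarrow> 'a::ring_1) \<Rightarrow> nat \<Rightarrow> (nat \<Rightarrow> nat) \<Rightarrow> 'a" where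
  "ymon y p a = prod_list (map (\<lambda>i. y i ^ a i) [0..<p])"

definition Tset :: "nat \<Rightarrow> (nat \<Rightarrow> nat) \<Rightarrow> (nat \<Rightarrow> nat) set" where
  "Tset p N = {t. (\<forall>l<p. t l < N l) \<and> (\<forall>l\<ge>p. t l = 0)}"

definition right_ideal :: "'a::ring_1 set \<Rightarrow> bool" where
  "right_ideal S \<longleftrightarrow> 0 \<in> S \<and> (\<forall>x\<in>S. \<forall>z\<in>S. x - z \<in> S) \<and> (\<forall>x\<in>S. \<forall>b. x * b \<in> S)"

text \<open>The free right k[\<Gamma>]-module with basis (m(t))_{t \<in> \<T>} is realised as the
functions \<T> \<rightarrow> k[\<Gamma>] (extended by 0 outside \<T>), inside (nat\<Rightarrow>nat) \<Rightarrow> 'a, with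
pointwise right multiplication; m(t) is the indicator of t.\<close>
definition mbasis :: "(nat \<Rightarrow> nat) \<Rightarrow> (nat \<Rightarrow> nat) \<Rightarrow> 'a::ring_1" where
  "mbasis t = (\<lambda>s. if s = t then 1 else 0)"

definition rmul :: "('i \<Rightarrow> 'a::ring_1) \<Rightarrow> 'a \<Rightarrow> ('i \<Rightarrow> 'a)" where
  "rmul f v = (\<lambda>s. f s * v)"

end

theory Submission
  imports Defs
begin

locale L4 =
  fixes sc :: "'k::field \<Rightarrow> 'a::ring_1"
    and \<iota> :: "'g::ab_group_add \<Rightarrow> 'a"
    and p :: nat
    and y :: "nat \<Rightarrow> 'a" and h :: "nat \<Rightarrow> 'g" and \<psi> :: "nat \<Rightarrow> 'g \<Rightarrow> 'k" and N :: "nat \<Rightarrow> nat"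
    and u :: "nat \<Rightarrow> 'a"
    and \<phi> :: "'a \<Rightarrow> ((nat \<Rightarrow> nat) \<Rightarrow> 'a)"
  assumes sc: "central_hom sc"
    and \<iota>: "grp_emb \<iota>"
    and chars: "\<And>l. l < p \<Longrightarrow> is_character (\<psi> l)"
    and Npos: "\<And>l. l < p \<Longrightarrow> N l \<ge> 1"
    and c2: "\<And>k l. k < p \<Longrightarrow> l < p \<Longrightarrow>
               y k * y l ^ N l = sc (\<psi> l (h k) ^ N l) * y l ^ N l * y k"
    and c3: "is_kbasis sc (multi_idx p \<times> UNIV) (\<lambda>(a, g). ymon y p a * \<iota> g)"
    and u_in: "\<And>l. l < p \<Longrightarrow> u l \<in> group_alg sc \<iota>"
    and u_central: "\<And>l x. l < p \<Longrightarrow> u l * x = x * u l"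
    and u_zero: "\<And>l. l < p \<Longrightarrow> (\<exists>g. \<psi> l g ^ N l \<noteq> 1) \<Longrightarrow> u l = 0"
    and \<phi>_add: "\<And>x z s. \<phi> (x + z) s = \<phi> x s + \<phi> z s"
    and \<phi>_rlin: "\<And>x v. v \<in> group_alg sc \<iota> \<Longrightarrow> \<phi> (x * v) = rmul (\<phi> x) v"
    and \<phi>_basis: "\<And>t a. t \<in> Tset p N \<Longrightarrow> a \<in> multi_idx p \<Longrightarrow>
        \<phi> (ymon y p t * ymon y p (\<lambda>l. a l * N l)) =
          rmul (mbasis t) (prod_list (map (\<lambda>l. u l ^ a l) [0..<p]))"
begin

lemma sc1: "sc 1 = 1" using sc unfolding central_hom_def by blast
lemma sc_add: "sc (c + d) = sc c + sc d" using sc unfolding central_hom_def by blast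
lemma sc_mult: "sc (c * d) = sc c * sc d" using sc unfolding central_hom_def by blast
lemma sc_comm: "sc c * x = x * sc c" using sc unfolding central_hom_def by blast
lemma sc0: "sc 0 = 0"
proof -
  have "sc (0 + 0) = sc 0 + sc 0" by (rule sc_add)
  then show ?thesis by simp
qed
lemma sc_left: "x * (sc c * z) = sc c * (x * z)"
  by (metis mult.assoc sc_comm)
lemma sc_inv: "c \<noteq> 0 \<Longrightarrow> sc (inverse c) * sc c = 1"
proof -
  assume c: "c \<noteq> 0"
  have "sc (inverse c) * sc c = sc (inverse c * c)" by (rule sc_mult[symmetric])
  also have "inverse c * c = 1" using c by (rule left_inverse)
  finally show ?thesis by (simp only: sc1)
qed

lemma sc_in: "sc c \<in> group_alg sc \<iota>"
proof -
  have "\<iota> 0 = 1" using \<iota> unfolding grp_emb_def by blast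
  then have "finite {0} \<and> sc c = (\<Sum>g\<in>{0}. sc ((\<lambda>_. c) g) * \<iota> g)" by simp
  then show ?thesis unfolding group_alg_def by (intro CollectI exI)
qed

lemma sc\<iota>_in: "sc c * \<iota> g \<in> group_alg sc \<iota>"
proof -
  have "finite {g} \<and> sc c * \<iota> g = (\<Sum>g'\<in>{g}. sc ((\<lambda>_. c) g') * \<iota> g')" by simp
  then show ?thesis unfolding group_alg_def by (intro CollectI exI)
qed

lemma \<phi>0: "\<phi> 0 = (\<lambda>_. 0)"
proof
  fix s have "\<phi> (0 + 0) s = \<phi> 0 s + \<phi> 0 s" by (rule \<phi>_add)
  then show "\<phi> 0 s = 0" by simp
qed

lemma \<phi>_neg: "\<phi> (- x) s = - \<phi> x s"
proof -
  have "\<phi> (x + - x) s = \<phi> x s + \<phi> (- x) s" by (rule \<phi>_add)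
  then have "\<phi> x s + \<phi> (- x) s = 0" by (simp add: \<phi>0)
  then have "- \<phi> x s = \<phi> (- x) s" by (rule minus_unique)
  then show ?thesis by (rule sym)
qed

lemma \<phi>_diff: "\<phi> (x - z) s = \<phi> x s - \<phi> z s"
proof -
  have "\<phi> (x + - z) s = \<phi> x s + \<phi> (- z) s" by (rule \<phi>_add)
  then show ?thesis unfolding \<phi>_neg diff_conv_add_uminus .
qed

lemma \<phi>_sc: "\<phi> (x * sc c) = rmul (\<phi> x) (sc c)"
  using \<phi>_rlin sc_in by blast

lemma span_induct:
  assumes P0: "P 0" and Padd: "\<And>x z. P x \<Longrightarrow> P z \<Longrightarrow> P (x + z)"
    and Pb: "\<And>a g c. a \<in> multi_idx p \<Longrightarrow> P (sc c * (ymon y p a * \<iota> g))"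
  shows "P x"
proof -
  from c3[unfolded is_kbasis_def, rule_format, of x] obtain c where
    c: "\<forall>s. s \<notin> multi_idx p \<times> UNIV \<longrightarrow> c s = 0" "finite {s. c s \<noteq> 0}"
       "x = (\<Sum>s\<in>{s. c s \<noteq> 0}. sc (c s) * (\<lambda>(a, g). ymon y p a * \<iota> g) s)"
    by blast
  have "\<And>F. finite F \<Longrightarrow> F \<subseteq> multi_idx p \<times> UNIV \<Longrightarrow>
     P (\<Sum>s\<in>F. sc (c s) * (\<lambda>(a, g). ymon y p a * \<iota> g) s)"
  proof -
    fix F :: "((nat \<Rightarrow> nat) \<times> 'g) set"
    assume "finite F" "F \<subseteq> multi_idx p \<times> UNIV"
    then show "P (\<Sum>s\<in>F. sc (c s) * (\<lambda>(a, g). ymon y p a * \<iota> g) s)"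
    proof (induction F rule: finite_induct)
      case empty then show ?case using P0 by simp
    next
      case (insert s F)
      obtain a g where s: "s = (a, g)" by fastforce
      have "a \<in> multi_idx p" using insert.prems s by auto
      then have "P (sc (c s) * (\<lambda>(a, g). ymon y p a * \<iota> g) s)" using Pb s by simp
      then show ?case using insert Padd by simp
    qed
  qed
  moreover have "{s. c s \<noteq> 0} \<subseteq> multi_idx p \<times> UNIV" using c(1) by blast
  ultimately show ?thesis using c(2,3) by simp
qed

definition qcS :: "'k set \<Rightarrow> 'a \<Rightarrow> 'a \<Rightarrow> bool" where
  "qcS S v w \<longleftrightarrow> (\<exists>s\<in>S. v * w = sc s * w * v)"

definition monS :: "'k set \<Rightarrow> bool" where
  "monS S \<longleftrightarrow> 1 \<in> S \<and> (\<forall>a\<in>S. \<forall>b\<in>S. a * b \<in> S) \<and> (\<forall>a\<in>S. a \<noteq> 0 \<and> inverse a \<in> S)"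

lemma qc_1r: "monS S \<Longrightarrow> qcS S v 1"
  unfolding qcS_def monS_def using sc1 by force

lemma qc_mult_r:
  assumes S: "monS S" and 1: "qcS S v w1" and 2: "qcS S v w2"
  shows "qcS S v (w1 * w2)"
proof -
  obtain s1 where s1: "s1 \<in> S" "v * w1 = sc s1 * w1 * v" using 1 unfolding qcS_def by blast
  obtain s2 where s2: "s2 \<in> S" "v * w2 = sc s2 * w2 * v" using 2 unfolding qcS_def by blast
  have e: "w1 * sc s2 = sc s2 * w1" by (rule sc_comm[symmetric])
  have "v * (w1 * w2) = (v * w1) * w2" by (simp only: mult.assoc)
  also have "\<dots> = sc s1 * w1 * (v * w2)" by (simp only: s1 mult.assoc)
  also have "\<dots> = sc s1 * w1 * (sc s2 * w2 * v)" by (simp only: s2)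
  also have "\<dots> = sc s1 * (w1 * sc s2) * w2 * v" by (simp only: mult.assoc)
  also have "\<dots> = sc (s1 * s2) * (w1 * w2) * v" by (simp only: e sc_mult mult.assoc)
  finally show ?thesis using S s1 s2 unfolding qcS_def monS_def by blast
qed

lemma qc_sym:
  assumes S: "monS S" and 1: "qcS S v w"
  shows "qcS S w v"
proof -
  obtain s where s: "s \<in> S" "v * w = sc s * w * v" using 1 unfolding qcS_def by blast
  have s0: "s \<noteq> 0" "inverse s \<in> S" using S s unfolding monS_def by auto
  have "sc (inverse s) * (v * w) = sc (inverse s) * (sc s * w * v)" by (simp only: s)
  also have "\<dots> = (sc (inverse s) * sc s) * (w * v)" by (simp only: mult.assoc)
  also have "\<dots> = w * v" using sc_inv[OF s0(1)] by simp
  finally have "w * v = sc (inverse s) * v * w" by (simp only: mult.assoc)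
  then show ?thesis using s0 unfolding qcS_def by blast
qed

lemma qc_mult_l:
  assumes S: "monS S" and 1: "qcS S v1 w" and 2: "qcS S v2 w"
  shows "qcS S (v1 * v2) w"
  using qc_sym[OF S] qc_mult_r[OF S] 1 2 by blast

lemma qc_pow_r: "monS S \<Longrightarrow> qcS S v w \<Longrightarrow> qcS S v (w ^ n)"
  by (induction n) (auto intro: qc_1r qc_mult_r)

lemma qc_pow_l: "monS S \<Longrightarrow> qcS S v w \<Longrightarrow> qcS S (v ^ n) w"
  using qc_pow_r qc_sym by blast

lemma qc_prod_r: "monS S \<Longrightarrow> (\<And>i. i \<in> set xs \<Longrightarrow> qcS S v (f i)) \<Longrightarrow> qcS S v (prod_list (map f xs))"
  by (induction xs) (auto intro: qc_1r qc_mult_r)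

lemma qc_prod_l: "monS S \<Longrightarrow> (\<And>i. i \<in> set xs \<Longrightarrow> qcS S (f i) w) \<Longrightarrow> qcS S (prod_list (map f xs)) w"
  using qc_prod_r[of S xs w f] qc_sym by blast

definition goodS :: "'k set \<Rightarrow> nat \<Rightarrow> bool" where
  "goodS S l \<longleftrightarrow> S = - {0} \<or> (S = {1} \<and> (\<forall>g. \<psi> l g ^ N l = 1))"

lemma goodS_mon: "goodS S l \<Longrightarrow> monS S"
  unfolding goodS_def monS_def by auto

lemma cnz: "l < p \<Longrightarrow> \<psi> l g ^ N l \<noteq> 0"
  using chars unfolding is_character_def by simp

lemma qc_base:
  assumes l: "l < p" and k: "k < p" and G: "goodS S l"
  shows "qcS S (y k) (y l ^ N l)"
proof -
  have "y k * y l ^ N l = sc (\<psi> l (h k) ^ N l) * y l ^ N l * y k" using c2 k l by blast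
  moreover have "\<psi> l (h k) ^ N l \<in> S" using G cnz[OF l] unfolding goodS_def by auto
  ultimately show ?thesis unfolding qcS_def by blast
qed

lemma qc_Y_mon:
  assumes l: "l < p" and G: "goodS S l"
  shows "qcS S (y l ^ N l) (ymon y p t)"
  unfolding ymon_def
proof (rule qc_prod_r)
  show S: "monS S" using G by (rule goodS_mon)
  fix i assume "i \<in> set [0..<p]"
  then have i: "i < p" by simp
  show "qcS S (y l ^ N l) (y i ^ t i)"
    by (rule qc_pow_r[OF S qc_sym[OF S qc_base[OF l i G]]])
qed

lemma split_prod:
  assumes "l < p"
  shows "prod_list (map f [0..<p]) = prod_list (map f [0..<l]) * f l * prod_list (map f [Suc l..<p])"
proof -
  have "[0..<p] = [0..<l] @ l # [Suc l..<p]"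
  proof -
    have "[0..<l + (p - l)] = [0..<l] @ [l..<l + (p - l)]" by (rule upt_add_eq_append) simp
    then have "[0..<p] = [0..<l] @ [l..<p]" using assms by simp
    also have "[l..<p] = l # [Suc l..<p]" using assms by (rule upt_conv_Cons)
    finally show ?thesis .
  qed
  then show ?thesis by (simp add: mult.assoc)
qed


abbreviation YY :: "nat \<Rightarrow> 'a" where "YY i \<equiv> y i ^ N i"

definition Iset :: "'a set" where
  "Iset = {x. \<exists>f. x = (\<Sum>l<p. (YY l - u l) * f l)}"

lemma I_intro: "x = (\<Sum>l<p. (YY l - u l) * f l) \<Longrightarrow> x \<in> Iset"
  unfolding Iset_def by (rule CollectI, rule exI[where x=f])

lemma I_0: "0 \<in> Iset"
  unfolding Iset_def by (rule CollectI, rule exI[where x="\<lambda>_. 0"]) simp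

lemma I_add: "x \<in> Iset \<Longrightarrow> z \<in> Iset \<Longrightarrow> x + z \<in> Iset"
proof -
  assume "x \<in> Iset" "z \<in> Iset"
  then obtain f g where f: "x = (\<Sum>l<p. (YY l - u l) * f l)" and g: "z = (\<Sum>l<p. (YY l - u l) * g l)"
    unfolding Iset_def by blast
  have "x + z = (\<Sum>l<p. (YY l - u l) * (f l + g l))"
    by (simp only: f g distrib_left sum.distrib)
  then show ?thesis by (rule I_intro)
qed

lemma I_rmul: "x \<in> Iset \<Longrightarrow> x * b \<in> Iset"
proof -
  assume "x \<in> Iset"
  then obtain f where f: "x = (\<Sum>l<p. (YY l - u l) * f l)" unfolding Iset_def by blast
  have "x * b = (\<Sum>l<p. (YY l - u l) * (f l * b))"
    by (simp only: f sum_distrib_right mult.assoc)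
  then show ?thesis by (rule I_intro)
qed

lemma I_gen: "l < p \<Longrightarrow> (YY l - u l) * w \<in> Iset"
proof -
  assume l: "l < p"
  have "(\<Sum>j<p. (YY j - u j) * (if j = l then w else 0)) = (\<Sum>j<p. if j = l then (YY j - u j) * w else 0)"
    by (rule sum.cong) auto
  also have "\<dots> = (YY l - u l) * w" using l by (simp add: sum.delta)
  finally show ?thesis by (rule I_intro[OF sym])
qed

definition LS :: "'a \<Rightarrow> bool" where "LS w \<longleftrightarrow> (\<forall>x\<in>Iset. w * x \<in> Iset)"

lemma LS_mult: "LS v \<Longrightarrow> LS w \<Longrightarrow> LS (v * w)"
  unfolding LS_def by (simp add: mult.assoc)

lemma LS_1: "LS 1" unfolding LS_def by simp

lemma LS_pow: "LS v \<Longrightarrow> LS (v ^ n)"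
  by (induction n) (simp_all add: LS_1 LS_mult)

lemma LS_prod: "(\<And>i. i \<in> set xs \<Longrightarrow> LS (f i)) \<Longrightarrow> LS (prod_list (map f xs))"
  by (induction xs) (simp_all add: LS_1 LS_mult)

lemma key_comm:
  assumes k: "k < p" and l: "l < p"
  shows "y k * (YY l - u l) = (YY l - u l) * (sc (\<psi> l (h k) ^ N l) * y k)"
proof -
  have c: "y k * YY l = sc (\<psi> l (h k) ^ N l) * YY l * y k" using c2 k l by blast
  have r: "YY l * (sc (\<psi> l (h k) ^ N l) * y k) = sc (\<psi> l (h k) ^ N l) * YY l * y k"
    by (simp only: sc_left mult.assoc)
  show ?thesis
  proof (cases "u l = 0")
    case True
    then show ?thesis using c r by simp
  next
    case False
    then have "\<psi> l (h k) ^ N l = 1" using u_zero l by blast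
    then have s1: "sc (\<psi> l (h k) ^ N l) = 1" using sc1 by simp
    have "y k * (YY l - u l) = y k * YY l - y k * u l" by (simp add: right_diff_distrib)
    also have "\<dots> = YY l * y k - u l * y k" using c s1 u_central[OF l, of "y k"] by simp
    also have "\<dots> = (YY l - u l) * (sc (\<psi> l (h k) ^ N l) * y k)" using s1 by (simp add: left_diff_distrib)
    finally show ?thesis .
  qed
qed

lemma LS_y: "k < p \<Longrightarrow> LS (y k)"
  unfolding LS_def
proof
  fix x assume k: "k < p" and "x \<in> Iset"
  then obtain f where f: "x = (\<Sum>l<p. (YY l - u l) * f l)" unfolding Iset_def by blast
  have "y k * x = (\<Sum>l<p. y k * (YY l - u l) * f l)"
    by (simp only: f sum_distrib_left mult.assoc)
  also have "\<dots> = (\<Sum>l<p. (YY l - u l) * (sc (\<psi> l (h k) ^ N l) * y k * f l))"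
    by (rule sum.cong) (simp_all add: key_comm k mult.assoc)
  finally show "y k * x \<in> Iset" by (rule I_intro)
qed

lemma LS_ymon: "LS (ymon y p t)"
  unfolding ymon_def by (rule LS_prod) (simp add: LS_pow LS_y)

lemma LS_YY: "l < p \<Longrightarrow> LS (YY l)"
  by (simp add: LS_pow LS_y)

lemma tele_pow: "l < p \<Longrightarrow> YY l ^ m - u l ^ m \<in> Iset"
proof (induction m)
  case 0 then show ?case using I_0 by simp
next
  case (Suc m)
  have "YY l ^ Suc m - u l ^ Suc m = YY l * (YY l ^ m - u l ^ m) + (YY l - u l) * u l ^ m"
    by (simp add: algebra_simps)
  moreover have "YY l * (YY l ^ m - u l ^ m) \<in> Iset" using LS_YY[OF Suc.prems] Suc LS_def by blast
  moreover have "(YY l - u l) * u l ^ m \<in> Iset" using I_gen Suc.prems by blast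
  ultimately show ?case using I_add by simp
qed

lemma tele_list: "set xs \<subseteq> {..<p} \<Longrightarrow>
   prod_list (map (\<lambda>i. YY i ^ b i) xs) - prod_list (map (\<lambda>i. u i ^ b i) xs) \<in> Iset"
proof (induction xs)
  case Nil then show ?case using I_0 by simp
next
  case (Cons i xs)
  let ?X = "YY i ^ b i" and ?U = "u i ^ b i"
  let ?P = "prod_list (map (\<lambda>i. YY i ^ b i) xs)" and ?Q = "prod_list (map (\<lambda>i. u i ^ b i) xs)"
  have i: "i < p" using Cons.prems by simp
  have "?X * ?P - ?U * ?Q = ?X * (?P - ?Q) + (?X - ?U) * ?Q" by (simp add: algebra_simps)
  moreover have "?X * (?P - ?Q) \<in> Iset" using Cons LS_pow[OF LS_YY[OF i]] LS_def by simp
  moreover have "(?X - ?U) * ?Q \<in> Iset" using I_rmul tele_pow[OF i] by blast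
  ultimately show ?case using I_add by simp
qed

lemma ymonN: "ymon y p (\<lambda>i. b i * N i) = prod_list (map (\<lambda>i. YY i ^ b i) [0..<p])"
proof -
  have e: "\<And>i. y i ^ (b i * N i) = YY i ^ b i"
    by (simp only: power_mult[symmetric] mult.commute)
  show ?thesis unfolding ymon_def by (simp only: e)
qed


lemma good_nz: "goodS (- {0}) l" unfolding goodS_def by simp

lemma qc_YY_y: "i < p \<Longrightarrow> k < p \<Longrightarrow> goodS S i \<Longrightarrow> qcS S (YY i) (y k)"
  using qc_sym goodS_mon qc_base by blast

lemma prod_Suc: "prod_list (map f [0..<Suc n]) = prod_list (map f [0..<n]) * f n"
  by simp

lemma NF: "n \<le> p \<Longrightarrow> \<exists>s. prod_list (map (\<lambda>i. y i ^ a i) [0..<n]) =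
   sc s * (prod_list (map (\<lambda>i. y i ^ (a i mod N i)) [0..<n]) * prod_list (map (\<lambda>i. YY i ^ (a i div N i)) [0..<n]))"
proof (induction n)
  case 0 show ?case by (rule exI[where x=1]) (simp add: sc1)
next
  case (Suc n)
  then have n: "n < p" by simp
  let ?T = "prod_list (map (\<lambda>i. y i ^ (a i mod N i)) [0..<n])"
  let ?B = "prod_list (map (\<lambda>i. YY i ^ (a i div N i)) [0..<n])"
  let ?t = "a n mod N n" and ?b = "a n div N n"
  obtain s where s: "prod_list (map (\<lambda>i. y i ^ a i) [0..<n]) = sc s * (?T * ?B)"
    using Suc by auto
  have S: "monS (- {0})" by (rule goodS_mon[OF good_nz])
  have "qcS (- {0}) ?B (y n ^ ?t)"
  proof (rule qc_prod_l[OF S])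
    fix i assume "i \<in> set [0..<n]"
    then have i: "i < p" using n by simp
    show "qcS (- {0}) (YY i ^ (a i div N i)) (y n ^ ?t)"
      by (rule qc_pow_l[OF S qc_pow_r[OF S qc_YY_y[OF i n good_nz]]])
  qed
  then obtain s' where s': "?B * y n ^ ?t = sc s' * y n ^ ?t * ?B" unfolding qcS_def by blast
  have ya: "y n ^ a n = y n ^ ?t * YY n ^ ?b"
    by (simp only: power_mult[symmetric] power_add[symmetric] mod_mult_div_eq)
  have "prod_list (map (\<lambda>i. y i ^ a i) [0..<Suc n]) = sc s * (?T * ?B) * (y n ^ ?t * YY n ^ ?b)"
    by (simp only: prod_Suc s ya)
  also have "\<dots> = sc s * (?T * ((?B * y n ^ ?t) * YY n ^ ?b))" by (simp only: mult.assoc)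
  also have "\<dots> = sc s * (?T * ((sc s' * y n ^ ?t * ?B) * YY n ^ ?b))" by (simp only: s')
  also have "\<dots> = sc s * (?T * (sc s' * (y n ^ ?t * (?B * YY n ^ ?b))))" by (simp only: mult.assoc)
  also have "\<dots> = sc s * (sc s' * (?T * (y n ^ ?t * (?B * YY n ^ ?b))))" by (simp only: sc_left[of ?T])
  also have "\<dots> = sc (s * s') * ((?T * y n ^ ?t) * (?B * YY n ^ ?b))" by (simp only: sc_mult mult.assoc)
  also have "\<dots> = sc (s * s') * (prod_list (map (\<lambda>i. y i ^ (a i mod N i)) [0..<Suc n]) *
        prod_list (map (\<lambda>i. YY i ^ (a i div N i)) [0..<Suc n]))" by (simp only: prod_Suc)
  finally show ?case by blast
qed

lemma NF_ymon: "\<exists>s. ymon y p a = sc s * (ymon y p (\<lambda>i. a i mod N i) * ymon y p (\<lambda>i. a i div N i * N i))"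
  using NF[of p a] unfolding ymonN by (simp add: ymon_def)

lemma T_in: "a \<in> multi_idx p \<Longrightarrow> (\<lambda>i. a i mod N i) \<in> Tset p N"
proof -
  assume a: "a \<in> multi_idx p"
  have "\<forall>l<p. a l mod N l < N l"
  proof (intro allI impI)
    fix l assume "l < p"
    then have "N l > 0" using Npos[of l] by simp
    then show "a l mod N l < N l" by (rule mod_less_divisor)
  qed
  then show ?thesis using a unfolding multi_idx_def Tset_def by auto
qed

lemma b_in: "a \<in> multi_idx p \<Longrightarrow> (\<lambda>i. a i div N i) \<in> multi_idx p"
  unfolding multi_idx_def by auto

lemma insertY:
  assumes l: "l < p" and G: "goodS S l"
  shows "\<exists>s\<in>S. ymon y p (\<lambda>i. b i * N i) * YY l = sc s * ymon y p (\<lambda>i. (b(l := Suc (b l))) i * N i)"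
proof -
  have S: "monS S" using G by (rule goodS_mon)
  let ?f = "\<lambda>i. YY i ^ b i" and ?f' = "\<lambda>i. YY i ^ (b(l := Suc (b l))) i"
  let ?L = "prod_list (map ?f [0..<l])" and ?R = "prod_list (map ?f [Suc l..<p])"
  have L: "map ?f' [0..<l] = map ?f [0..<l]" by (rule map_cong) auto
  have R: "map ?f' [Suc l..<p] = map ?f [Suc l..<p]" by (rule map_cong) auto
  have "qcS S (YY l) ?R"
  proof (rule qc_prod_r[OF S])
    fix i assume "i \<in> set [Suc l..<p]"
    then have i: "i < p" by simp
    show "qcS S (YY l) (YY i ^ b i)"
      by (rule qc_pow_r[OF S qc_pow_r[OF S qc_sym[OF S qc_base[OF l i G]]]])
  qed
  then obtain s where s: "s \<in> S" "?R * YY l = sc s * YY l * ?R" using qc_sym[OF S] unfolding qcS_def by blast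
  have fl: "?f l * YY l = ?f' l" by (simp only: fun_upd_same power_Suc2)
  have "ymon y p (\<lambda>i. b i * N i) * YY l = ?L * ?f l * ?R * YY l"
    by (simp only: ymonN split_prod[OF l])
  also have "\<dots> = ?L * (?f l * (sc s * (YY l * ?R)))" by (simp only: mult.assoc s(2))
  also have "\<dots> = sc s * (?L * (?f l * (YY l * ?R)))" by (simp only: sc_left[of "?f l"] sc_left[of ?L])
  also have "\<dots> = sc s * (?L * (?f' l * ?R))" by (simp only: mult.assoc[symmetric] fl)
  also have "\<dots> = sc s * ymon y p (\<lambda>i. (b(l := Suc (b l))) i * N i)"
    by (simp only: ymonN split_prod[OF l] L R mult.assoc)
  finally show ?thesis using s(1) by blast
qed


abbreviation UU :: "(nat \<Rightarrow> nat) \<Rightarrow> 'a" where "UU c \<equiv> prod_list (map (\<lambda>i. u i ^ c i) [0..<p])"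

lemma U_split:
  assumes l: "l < p"
  shows "UU (b(l := Suc (b l))) = UU b * u l"
proof -
  let ?f = "\<lambda>i. u i ^ b i" and ?f' = "\<lambda>i. u i ^ (b(l := Suc (b l))) i"
  let ?L = "prod_list (map ?f [0..<l])" and ?R = "prod_list (map ?f [Suc l..<p])"
  have L: "map ?f' [0..<l] = map ?f [0..<l]" by (rule map_cong) auto
  have R: "map ?f' [Suc l..<p] = map ?f [Suc l..<p]" by (rule map_cong) auto
  have "UU (b(l := Suc (b l))) = ?L * (u l ^ b l * u l) * ?R"
    by (simp only: split_prod[OF l] L R fun_upd_same power_Suc2)
  also have "\<dots> = ?L * u l ^ b l * (u l * ?R)" by (simp only: mult.assoc)
  also have "\<dots> = ?L * u l ^ b l * (?R * u l)" by (simp only: u_central[OF l])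
  also have "\<dots> = UU b * u l" by (simp only: split_prod[OF l] mult.assoc)
  finally show ?thesis .
qed

lemma U_zero:
  assumes l: "l < p" and u0: "u l = 0"
  shows "UU (b(l := Suc (b l))) = 0"
  using U_split[OF l] u0 by simp

lemma A_key:
  assumes l: "l < p" and t: "t \<in> Tset p N" and b: "b \<in> multi_idx p"
  shows "\<phi> ((YY l - u l) * (ymon y p t * ymon y p (\<lambda>i. b i * N i))) = (\<lambda>_. 0)"
proof -
  let ?T = "ymon y p t" and ?B = "ymon y p (\<lambda>i. b i * N i)"
  let ?b' = "b(l := Suc (b l))"
  let ?B' = "ymon y p (\<lambda>i. ?b' i * N i)"
  have b': "?b' \<in> multi_idx p" using b l unfolding multi_idx_def by auto
  have ph': "\<phi> (?T * ?B') = rmul (mbasis t) (UU ?b')" by (rule \<phi>_basis[OF t b'])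
  show ?thesis
  proof (cases "u l = 0")
    case True
    have G: "goodS (- {0}) l" by (rule good_nz)
    have S: "monS (- {0})" by (rule goodS_mon[OF G])
    have "qcS (- {0}) (YY l) (?T * ?B)"
      by (rule qc_mult_r[OF S qc_Y_mon[OF l G] qc_Y_mon[OF l G]])
    then obtain s where s: "YY l * (?T * ?B) = sc s * (?T * ?B) * YY l" unfolding qcS_def by blast
    obtain s' where s': "?B * YY l = sc s' * ?B'" using insertY[OF l G, of b] by blast
    have "(YY l - u l) * (?T * ?B) = YY l * (?T * ?B)" using True by simp
    also have "\<dots> = sc s * (?T * (?B * YY l))" by (simp only: s mult.assoc)
    also have "\<dots> = sc s * (sc s' * (?T * ?B'))" by (simp only: s' sc_left[of ?T])
    also have "\<dots> = sc (s * s') * (?T * ?B')" by (simp only: sc_mult mult.assoc)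
    also have "\<dots> = (?T * ?B') * sc (s * s')" by (rule sc_comm)
    finally have e: "(YY l - u l) * (?T * ?B) = (?T * ?B') * sc (s * s')" .
    show ?thesis unfolding e \<phi>_sc ph' U_zero[OF l True] by (simp add: rmul_def)
  next
    case False
    then have "\<forall>g. \<psi> l g ^ N l = 1" using u_zero l by blast
    then have G: "goodS {1} l" unfolding goodS_def by simp
    have S: "monS {1}" by (rule goodS_mon[OF G])
    have "qcS {1} (YY l) (?T * ?B)"
      by (rule qc_mult_r[OF S qc_Y_mon[OF l G] qc_Y_mon[OF l G]])
    then have s: "YY l * (?T * ?B) = (?T * ?B) * YY l" unfolding qcS_def using sc1 by simp
    have s': "?B * YY l = ?B'" using insertY[OF l G, of b] sc1 by simp
    have "(YY l - u l) * (?T * ?B) = YY l * (?T * ?B) - u l * (?T * ?B)" by (simp only: left_diff_distrib)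
    also have "\<dots> = ?T * ?B' - (?T * ?B) * u l" by (simp only: s u_central[OF l] mult.assoc s')
    finally have e: "(YY l - u l) * (?T * ?B) = ?T * ?B' - (?T * ?B) * u l" .
    have ph: "\<phi> ((?T * ?B) * u l) = rmul (rmul (mbasis t) (UU b)) (u l)"
      by (simp only: \<phi>_rlin[OF u_in[OF l]] \<phi>_basis[OF t b])
    show ?thesis
    proof
      fix x
      show "\<phi> ((YY l - u l) * (?T * ?B)) x = 0"
        unfolding e \<phi>_diff ph ph' U_split[OF l] by (simp add: rmul_def mult.assoc)
    qed
  qed
qed

lemma \<phi>_basis_gen:
  assumes l: "l < p" and a: "a \<in> multi_idx p"
  shows "\<phi> ((YY l - u l) * ymon y p a) = (\<lambda>_. 0)"
proof -
  obtain s where s: "ymon y p a = sc s * (ymon y p (\<lambda>i. a i mod N i) * ymon y p (\<lambda>i. a i div N i * N i))"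
    using NF_ymon by blast
  let ?W = "ymon y p (\<lambda>i. a i mod N i) * ymon y p (\<lambda>i. a i div N i * N i)"
  have "(YY l - u l) * ymon y p a = ((YY l - u l) * ?W) * sc s"
    by (simp only: s sc_left[of "YY l - u l"] sc_comm[of s] mult.assoc)
  then show ?thesis
    using A_key[OF l T_in[OF a] b_in[OF a]] by (simp add: \<phi>_sc rmul_def)
qed

lemma A_all: "l < p \<Longrightarrow> \<phi> ((YY l - u l) * x) = (\<lambda>_. 0)"
proof (induction x rule: span_induct)
  case 1 then show ?case by (simp add: \<phi>0)
next
  case (2 x z)
  then show ?case by (simp add: distrib_left \<phi>_add[abs_def])
next
  case (3 a g c)
  have "(YY l - u l) * (sc c * (ymon y p a * \<iota> g)) = ((YY l - u l) * ymon y p a) * (sc c * \<iota> g)"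
    by (simp only: sc_left mult.assoc)
  then show ?case using \<phi>_basis_gen[OF 3(2) 3(1)] \<phi>_rlin[OF sc\<iota>_in] by (simp add: rmul_def)
qed


lemma finite_T: "finite (Tset p N)"
proof -
  let ?M = "\<Sum>l<p. N l"
  have "Tset p N \<subseteq> {f. \<forall>x. (x \<in> {..<p} \<longrightarrow> f x \<in> {..<?M}) \<and> (x \<notin> {..<p} \<longrightarrow> f x = 0)}"
  proof
    fix t assume t: "t \<in> Tset p N"
    have "\<And>x. x < p \<Longrightarrow> t x < ?M"
    proof -
      fix x assume x: "x < p"
      have "t x < N x" using t x unfolding Tset_def by auto
      also have "N x \<le> ?M" using x by (intro member_le_sum) auto
      finally show "t x < ?M" .
    qed
    then show "t \<in> {f. \<forall>x. (x \<in> {..<p} \<longrightarrow> f x \<in> {..<?M}) \<and> (x \<notin> {..<p} \<longrightarrow> f x = 0)}"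
      using t unfolding Tset_def by auto
  qed
  moreover have "finite {f. \<forall>x. (x \<in> {..<p} \<longrightarrow> f x \<in> {..<?M}) \<and> (x \<notin> {..<p} \<longrightarrow> (f x :: nat) = 0)}"
    by (rule finite_set_of_finite_funs) auto
  ultimately show ?thesis by (rule finite_subset)
qed

definition DD :: "'a \<Rightarrow> 'a" where
  "DD x = x - (\<Sum>t\<in>Tset p N. ymon y p t * \<phi> x t)"

lemma DD_ymon: "a \<in> multi_idx p \<Longrightarrow> DD (ymon y p a) \<in> Iset"
proof -
  assume a: "a \<in> multi_idx p"
  let ?t = "\<lambda>i. a i mod N i" and ?b = "\<lambda>i. a i div N i"
  let ?T = "ymon y p ?t" and ?B = "ymon y p (\<lambda>i. ?b i * N i)"
  have t: "?t \<in> Tset p N" by (rule T_in[OF a])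
  have b: "?b \<in> multi_idx p" by (rule b_in[OF a])
  obtain s where s: "ymon y p a = sc s * (?T * ?B)" using NF_ymon by blast
  have ya: "ymon y p a = (?T * ?B) * sc s" by (simp only: s sc_comm)
  have ph: "\<phi> (ymon y p a) = rmul (rmul (mbasis ?t) (UU ?b)) (sc s)"
    by (simp only: ya \<phi>_sc \<phi>_basis[OF t b])
  have "(\<Sum>t'\<in>Tset p N. ymon y p t' * \<phi> (ymon y p a) t') =
        (\<Sum>t'\<in>Tset p N. if t' = ?t then ?T * (UU ?b * sc s) else 0)"
    by (rule sum.cong) (simp_all add: ph rmul_def mbasis_def)
  also have "\<dots> = ?T * (UU ?b * sc s)" using t finite_T by (simp add: sum.delta')
  finally have e: "(\<Sum>t'\<in>Tset p N. ymon y p t' * \<phi> (ymon y p a) t') = ?T * (UU ?b * sc s)" .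
  have "DD (ymon y p a) = (?T * (?B - UU ?b)) * sc s"
    unfolding DD_def e by (subst ya) (simp add: algebra_simps)
  moreover have "?B - UU ?b \<in> Iset" unfolding ymonN by (rule tele_list) auto
  ultimately show ?thesis using LS_ymon[of ?t] I_rmul unfolding LS_def by simp
qed

lemma DD_all: "DD x \<in> Iset"
proof (induction x rule: span_induct)
  case 1 then show ?case by (simp add: DD_def \<phi>0 I_0)
next
  case (2 x z)
  have "DD (x + z) = DD x + DD z"
    unfolding DD_def by (simp add: \<phi>_add distrib_left sum.distrib algebra_simps)
  then show ?case using 2 I_add by simp
next
  case (3 a g c)
  let ?v = "sc c * \<iota> g" and ?Y = "ymon y p a"
  have e: "sc c * (?Y * \<iota> g) = ?Y * ?v" by (simp only: sc_left[of ?Y])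
  have "DD (?Y * ?v) = DD ?Y * ?v"
    unfolding DD_def \<phi>_rlin[OF sc\<iota>_in] by (simp add: rmul_def sum_distrib_right mult.assoc left_diff_distrib)
  then show ?case unfolding e using DD_ymon[OF 3] I_rmul by simp
qed

lemma \<phi>_sum_zero: "(\<And>i. i \<in> F \<Longrightarrow> \<phi> (g i) = (\<lambda>_. 0)) \<Longrightarrow> \<phi> (sum g F) = (\<lambda>_. 0)"
proof (induction F rule: infinite_finite_induct)
  case (infinite F) then show ?case by (simp add: \<phi>0)
next
  case empty then show ?case by (simp add: \<phi>0)
next
  case (insert i F)
  then show ?case by (simp add: \<phi>_add[abs_def])
qed

lemma I_phi: "x \<in> Iset \<Longrightarrow> \<phi> x = (\<lambda>_. 0)"
proof -
  assume "x \<in> Iset"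
  then obtain f where f: "x = (\<Sum>l<p. (YY l - u l) * f l)" unfolding Iset_def by blast
  show ?thesis unfolding f by (rule \<phi>_sum_zero) (simp add: A_all)
qed

lemma main: "right_ideal {x. \<phi> x = (\<lambda>_. 0)}"
  unfolding right_ideal_def
proof (intro conjI ballI allI)
  show "0 \<in> {x. \<phi> x = (\<lambda>_. 0)}" by (simp add: \<phi>0)
next
  fix x z assume "x \<in> {x. \<phi> x = (\<lambda>_. 0)}" "z \<in> {x. \<phi> x = (\<lambda>_. 0)}"
  then show "x - z \<in> {x. \<phi> x = (\<lambda>_. 0)}" by (simp add: \<phi>_diff[abs_def])
next
  fix x b assume "x \<in> {x. \<phi> x = (\<lambda>_. 0)}"
  then have "\<phi> x = (\<lambda>_. 0)" by simp
  then have "DD x = x" unfolding DD_def by simp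
  then have "x \<in> Iset" using DD_all by metis
  then have "x * b \<in> Iset" by (rule I_rmul)
  then show "x * b \<in> {x. \<phi> x = (\<lambda>_. 0)}" using I_phi by simp
qed


end

theorem lemma4p1:
  fixes sc :: "'k::field_char_0 \<Rightarrow> 'a::ring_1"
    and \<iota> :: "'g::ab_group_add \<Rightarrow> 'a"
    and p :: nat
    and y :: "nat \<Rightarrow> 'a" and h :: "nat \<Rightarrow> 'g" and \<psi> :: "nat \<Rightarrow> 'g \<Rightarrow> 'k" and N :: "nat \<Rightarrow> nat"
    and u :: "nat \<Rightarrow> 'a"
    and \<phi> :: "'a \<Rightarrow> ((nat \<Rightarrow> nat) \<Rightarrow> 'a)"
  assumes closed: "alg_closed_field TYPE('k)"
    and sc: "central_hom sc"
    and \<iota>: "grp_emb \<iota>"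
    and p: "p \<ge> 1"
    and chars: "\<And>l. l < p \<Longrightarrow> is_character (\<psi> l)"
    and Npos: "\<And>l. l < p \<Longrightarrow> N l \<ge> 1"
    and c1: "\<And>l g. l < p \<Longrightarrow> \<iota> g * y l = sc (\<psi> l g) * y l * \<iota> g"
    and c2: "\<And>k l. k < p \<Longrightarrow> l < p \<Longrightarrow>
               y k * y l ^ N l = sc (\<psi> l (h k) ^ N l) * y l ^ N l * y k"
    and c3: "is_kbasis sc (multi_idx p \<times> UNIV) (\<lambda>(a, g). ymon y p a * \<iota> g)"
    and u_in: "\<And>l. l < p \<Longrightarrow> u l \<in> group_alg sc \<iota>"
    and u_central: "\<And>l x. l < p \<Longrightarrow> u l * x = x * u l"
    and u_zero: "\<And>l. l < p \<Longrightarrow> (\<exists>g. \<psi> l g ^ N l \<noteq> 1) \<Longrightarrow> u l = 0"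
    and \<phi>_add: "\<And>x z s. \<phi> (x + z) s = \<phi> x s + \<phi> z s"
    and \<phi>_rlin: "\<And>x v. v \<in> group_alg sc \<iota> \<Longrightarrow> \<phi> (x * v) = rmul (\<phi> x) v"
    and \<phi>_basis: "\<And>t a. t \<in> Tset p N \<Longrightarrow> a \<in> multi_idx p \<Longrightarrow>
        \<phi> (ymon y p t * ymon y p (\<lambda>l. a l * N l)) =
          rmul (mbasis t) (prod_list (map (\<lambda>l. u l ^ a l) [0..<p]))"
  shows "right_ideal {x. \<phi> x = (\<lambda>_. 0)}"
proof -
  interpret L: L4 sc \<iota> p y h \<psi> N u \<phi>
    by (unfold_locales; (rule assms)?; blast intro: assms)
  show ?thesis by (rule L.main)
qed

end
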